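(* Let $1\le n\le L$ and $I\subseteq\{1,\dots,n\}$. The set $\Omega^I_{L,n}$ is stable under the dynamics on $\Omega_{L,n}$ from which the transitions (T3) and (T4) with $k\in I$ are excluded: if $w\in\Omega^I_{L,n}$ and $w\to w'$ is a transition of type (T1) or (T2) (any $k$), or of type (T3) or (T4) with $k\notin I$, then $w'\in\Omega^I_{L,n}$.
   Context: Particle labels are taken modulo $n$, positions modulo $L$. $\Omega_{L,n}$ is the set of words $w_1\cdots w_L$ on the ring $\mathbb{Z}/L\mathbb{Z}$ over the alphabet $\{\bullet_1,\dots,\bullet_n,\Box_1,\dots,\Box_n\}$ in which each $\bullet_k$ occurs exactly once, the $\bullet_1,\dots,\bullet_n$ appear in this cyclic order, and the remaining $L-n$ letters are arbitrary $\Box_i$'s. Transitions (displayed segments are consecutive positions, rest unchanged, $C$ a possibly empty word in the $\Box$-letters): (T1) $\bullet_k\Box_i \to \Box_i\bullet_k$ at rate $p_k$, if $i\neq k$; (T2) $\bullet_{k-1}\,C\,\bullet_k\Box_k \to \bullet_{k-1}\Box_{k-1}\,C\,\bullet_k$ at rate $p_k$; (T3) $\Box_i\bullet_k \to \bullet_k\Box_i$ at rate $q_k$, if $i\neq k$; (T4) $\Box_k\bullet_k\,C\,\bullet_{k+1} \to \bullet_k\,C\,\Box_{k+1}\bullet_{k+1}$ at rate $q_k$. Weights: let $b_k$ be the position of $\bullet_k$ and $C_k$ the set of positions strictly between $b_k$ and $b_{k+1}$ going cyclically forward ($b_{n+1}=b_1$). For $i,k\in\{1,\dots,n\}$ set $w_\Box(i,k)=p_1\cdots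 p_{i-1}q_{i+1}\cdots q_kp_{k+1}\cdots p_n$ if $i\le k$ and $w_\Box(i,k)=q_1\cdots q_kp_{k+1}\cdots p_{i-1}q_{i+1}\cdots q_n$ if $k<i$ (empty products are $1$), as monomials in indeterminates. The weight is the monomial $\mathrm{wt}(w)=\prod_{k=1}^n\prod_{j\in C_k}w_\Box(i_j,k)$ where $w_j=\Box_{i_j}$. $\Omega^I_{L,n}$ is the set of $w\in\Omega_{L,n}$ whose weight monomial contains no $q_k$ with $k\in I$ (i.e. $\mathrm{wt}(w)\ne0$ when $q_k=0$ for $k\in I$ and all other rates are positive). *)

theory Defs
  imports Main "HOL-Library.Multiset"
begin

text \<open>Letters: Ball k is the particle bullet_k, Box i is the empty-site letter Box_i.
  Words on the ring Z/LZ are lists of length L; position i (i < L) is w ! i,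
  and the successor of position i is (i+1) mod L.\<close>

datatype letter = Ball nat | Box nat

text \<open>Labels modulo n, represented in {1..n}.\<close>
definition prevl :: "nat \<Rightarrow> nat \<Rightarrow> nat" where
  "prevl n k = (if k = 1 then n else k - 1)"

definition nextl :: "nat \<Rightarrow> nat \<Rightarrow> nat" where
  "nextl n k = (if k = n then 1 else k + 1)"

definition bpos :: "letter list \<Rightarrow> nat \<Rightarrow> nat" where
  "bpos w k = (THE i. i < length w \<and> w ! i = Ball k)"

definition Omega :: "nat \<Rightarrow> nat \<Rightarrow> letter list set" where
  "Omega L n = {w. length w = L
      \<and> (\<forall>i<L. (\<exists>k\<in>{1..n}. w ! i = Ball k) \<or> (\<exists>k\<in>{1..n}. w ! i = Box k))
      \<and> (\<forall>k\<in>{1..n}. card {i. i < L \<and> w ! i = Ball k} = 1)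
      \<and> (\<forall>k. 1 \<le> k \<and> k < n \<longrightarrow>
            (bpos w k + L - bpos w 1) mod L < (bpos w (k+1) + L - bpos w 1) mod L)}"

text \<open>The displayed segment xs occupies the consecutive positions s, s+1, ... (mod L)
  of the ring, which are pairwise distinct (length xs \<le> L).\<close>
definition is_seg :: "letter list \<Rightarrow> nat \<Rightarrow> letter list \<Rightarrow> bool" where
  "is_seg w s xs \<longleftrightarrow> s < length w \<and> length xs \<le> length w \<and>
      (\<forall>j<length xs. w ! ((s + j) mod length w) = xs ! j)"

definition replace_seg :: "letter list \<Rightarrow> nat \<Rightarrow> letter list \<Rightarrow> letter list" where
  "replace_seg w s ys = map (\<lambda>i. let j = (i + length w - s) mod length w in
        if j < length ys then ys ! j else w ! i) [0..<length w]"

definition is_box :: "letter \<Rightarrow> bool" where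
  "is_box x \<longleftrightarrow> (\<exists>i. x = Box i)"

definition T1 :: "nat \<Rightarrow> nat \<Rightarrow> letter list \<Rightarrow> letter list \<Rightarrow> bool" where
  "T1 n k w w' \<longleftrightarrow> k \<in> {1..n} \<and> (\<exists>s i. i \<noteq> k \<and> is_seg w s [Ball k, Box i]
      \<and> w' = replace_seg w s [Box i, Ball k])"

definition T2 :: "nat \<Rightarrow> nat \<Rightarrow> letter list \<Rightarrow> letter list \<Rightarrow> bool" where
  "T2 n k w w' \<longleftrightarrow> k \<in> {1..n} \<and> (\<exists>s C. (\<forall>x\<in>set C. is_box x)
      \<and> is_seg w s ([Ball (prevl n k)] @ C @ [Ball k, Box k])
      \<and> w' = replace_seg w s ([Ball (prevl n k), Box (prevl n k)] @ C @ [Ball k]))"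

definition T3 :: "nat \<Rightarrow> nat \<Rightarrow> letter list \<Rightarrow> letter list \<Rightarrow> bool" where
  "T3 n k w w' \<longleftrightarrow> k \<in> {1..n} \<and> (\<exists>s i. i \<noteq> k \<and> is_seg w s [Box i, Ball k]
      \<and> w' = replace_seg w s [Ball k, Box i])"

definition T4 :: "nat \<Rightarrow> nat \<Rightarrow> letter list \<Rightarrow> letter list \<Rightarrow> bool" where
  "T4 n k w w' \<longleftrightarrow> k \<in> {1..n} \<and> (\<exists>s C. (\<forall>x\<in>set C. is_box x)
      \<and> is_seg w s ([Box k, Ball k] @ C @ [Ball (nextl n k)])
      \<and> w' = replace_seg w s ([Ball k] @ C @ [Box (nextl n k), Ball (nextl n k)]))"

text \<open>Indeterminates p_k, q_k; monomials are multisets of indeterminates.\<close>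
datatype var = P nat | Q nat

definition wbox :: "nat \<Rightarrow> nat \<Rightarrow> nat \<Rightarrow> var multiset" where
  "wbox n i k = (if i \<le> k then
       mset_set (P ` {1..<i}) + mset_set (Q ` {i+1..k}) + mset_set (P ` {k+1..n})
     else
       mset_set (Q ` {1..k}) + mset_set (P ` {k+1..<i}) + mset_set (Q ` {i+1..n}))"

text \<open>C_k: positions strictly between b_k and b_{k+1} going cyclically forward.
  Their number is (b_{k+1} + L - b_k - 1) mod L (equal to L-1 when b_{k+1} = b_k, i.e. n = 1).\<close>
definition Cset :: "nat \<Rightarrow> letter list \<Rightarrow> nat \<Rightarrow> nat set" where
  "Cset n w k = (let L = length w; a = bpos w k; b = bpos w (nextl n k) in
      {(a + 1 + d) mod L | d. d < (b + L - a - 1) mod L})"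

definition wt :: "nat \<Rightarrow> letter list \<Rightarrow> var multiset" where
  "wt n w = (\<Sum>k\<in>{1..n}. \<Sum>j\<in>Cset n w k.
      (case w ! j of Box i \<Rightarrow> wbox n i k | Ball _ \<Rightarrow> {#}))"

definition OmegaI :: "nat \<Rightarrow> nat \<Rightarrow> nat set \<Rightarrow> letter list set" where
  "OmegaI L n I = {w \<in> Omega L n. \<forall>k\<in>I. count (wt n w) (Q k) = 0}"

end

theory Submission
  imports Defs
begin

fun bl :: "nat \<Rightarrow> nat \<Rightarrow> letter list list \<Rightarrow> letter list" where
  "bl n a [] = []"
| "bl n a (C # Cs) = Ball a # C @ bl n (nextl n a) Cs"

definition okbox :: "nat \<Rightarrow> nat set \<Rightarrow> nat \<Rightarrow> letter \<Rightarrow> bool" where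
  "okbox n I a x \<longleftrightarrow> (\<exists>i. x = Box i \<and> 1 \<le> i \<and> i \<le> n \<and> (\<forall>m\<in>I. count (wbox n i a) (Q m) = 0))"

fun goodbl :: "nat \<Rightarrow> nat set \<Rightarrow> nat \<Rightarrow> letter list list \<Rightarrow> bool" where
  "goodbl n I a [] = True"
| "goodbl n I a (C # Cs) = ((\<forall>x\<in>set C. okbox n I a x) \<and> goodbl n I (nextl n a) Cs)"

abbreviation nx :: "nat \<Rightarrow> nat \<Rightarrow> nat \<Rightarrow> nat" where "nx n t a \<equiv> (nextl n ^^ t) a"

lemma bl_append: "bl n a (xs @ ys) = bl n a xs @ bl n (nx n (length xs) a) ys"
  by (induction xs arbitrary: a) (auto simp: funpow_swap1)

lemma goodbl_append: "goodbl n I a (xs @ ys) = (goodbl n I a xs \<and> goodbl n I (nx n (length xs) a) ys)"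
  by (induction xs arbitrary: a) (auto simp: funpow_swap1)

lemma nx_eq: "1 \<le> a \<Longrightarrow> a \<le> n \<Longrightarrow> nx n t a = (a - 1 + t) mod n + 1"
proof (induction t)
  case 0 then show ?case by simp
next
  case (Suc t)
  have "n > 0" using Suc by simp
  have e: "a - 1 + Suc t = Suc (a - 1 + t)" by simp
  show ?case using Suc unfolding e mod_Suc by (simp add: nextl_def)
qed

lemma nx_range: "1 \<le> a \<Longrightarrow> a \<le> n \<Longrightarrow> 1 \<le> nx n t a \<and> nx n t a \<le> n"
  using nx_eq[of a n t] by (simp add: Suc_leI)

lemma nx_n: "1 \<le> a \<Longrightarrow> a \<le> n \<Longrightarrow> nx n n a = a"
proof -
  assume a: "1 \<le> a" "a \<le> n"
  have "(a - 1 + n) mod n = a - 1" using a by (simp only: mod_add_self2) simp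
  then show ?thesis using nx_eq[of a n n] a by simp
qed

lemma nx_prev: "1 \<le> a \<Longrightarrow> a \<le> n \<Longrightarrow> nx n (n - 1) a = prevl n a"
proof -
  assume a: "1 \<le> a" "a \<le> n"
  have "nx n (n - 1) a = (a - 1 + (n - 1)) mod n + 1" using nx_eq a by blast
  also have "\<dots> = prevl n a"
  proof (cases "a = 1")
    case True then show ?thesis using a by (simp add: prevl_def)
  next
    case False
    then have "a - 1 + (n - 1) = (a - 2) + 1 * n" using a by simp
    then have "(a - 1 + (n - 1)) mod n = (a - 2) mod n" by (metis mod_mult_self1)
    also have "\<dots> = a - 2" using a False by simp
    finally show ?thesis using a False by (simp add: prevl_def)
  qed
  finally show ?thesis .
qed

lemma nx_small: "t < n \<Longrightarrow> nx n t 1 = t + 1"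
  using nx_eq[of 1 n t] by simp

lemma next_prev: "1 \<le> k \<Longrightarrow> k \<le> n \<Longrightarrow> nextl n (prevl n k) = k"
  by (auto simp: nextl_def prevl_def)

lemma prev_range: "1 \<le> k \<Longrightarrow> k \<le> n \<Longrightarrow> 1 \<le> prevl n k \<and> prevl n k \<le> n"
  by (auto simp: prevl_def)
lemma next_range: "1 \<le> k \<Longrightarrow> k \<le> n \<Longrightarrow> 1 \<le> nextl n k \<and> nextl n k \<le> n"
  by (auto simp: nextl_def)

lemma count_wbox: "1 \<le> m \<Longrightarrow> count (wbox n i k) (Q m) =
  (if i \<le> k then (if i < m \<and> m \<le> k then 1 else 0) else (if m \<le> k \<or> (i < m \<and> m \<le> n) then 1 else 0))"
  unfolding wbox_def by (auto simp: count_mset_set' image_iff)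

lemma cyc_T1: "1 \<le> m \<Longrightarrow> m \<le> n \<Longrightarrow> 1 \<le> k \<Longrightarrow> k \<le> n \<Longrightarrow> 1 \<le> i \<Longrightarrow> i \<le> n \<Longrightarrow> i \<noteq> k \<Longrightarrow> count (wbox n i k) (Q m) = 0
  \<Longrightarrow> count (wbox n i (prevl n k)) (Q m) = 0"
  by (auto simp: count_wbox prevl_def split: if_splits)

lemma cyc_T3: "1 \<le> m \<Longrightarrow> m \<le> n \<Longrightarrow> 1 \<le> k \<Longrightarrow> k \<le> n \<Longrightarrow> 1 \<le> i \<Longrightarrow> i \<le> n \<Longrightarrow> i \<noteq> k \<Longrightarrow> m \<noteq> k \<Longrightarrow>
  count (wbox n i (prevl n k)) (Q m) = 0 \<Longrightarrow> count (wbox n i k) (Q m) = 0"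
  by (auto simp: count_wbox prevl_def split: if_splits)

lemma cyc_T2: "1 \<le> m \<Longrightarrow> count (wbox n a a) (Q m) = 0"
  by (auto simp: count_wbox)

lemma cyc_T4: "2 \<le> n \<Longrightarrow> 1 \<le> k \<Longrightarrow> k \<le> n \<Longrightarrow> 1 \<le> m \<Longrightarrow> m \<le> n \<Longrightarrow> m \<noteq> k \<Longrightarrow>
  count (wbox n k (prevl n k)) (Q m) \<noteq> 0"
  by (auto simp: count_wbox prevl_def split: if_splits)

lemma bl_take_drop: "t \<le> length Cs \<Longrightarrow> bl n a Cs = bl n a (take t Cs) @ bl n (nx n t a) (drop t Cs)"
  by (metis append_take_drop_id bl_append length_take min_absorb2)

lemma nx_comp: "nx n u (nx n t a) = nx n (u + t) a"
  by (simp add: funpow_add)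

lemma bl_nth_ball: "t < length Cs \<Longrightarrow> bl n a Cs ! length (bl n a (take t Cs)) = Ball (nx n t a)"
proof -
  assume t: "t < length Cs"
  have "bl n a Cs = bl n a (take t Cs) @ bl n (nx n t a) (drop t Cs)"
    using t bl_take_drop by simp
  also have "\<dots> = bl n a (take t Cs) @ bl n (nx n t a) (Cs ! t # drop (Suc t) Cs)"
    using t by (simp add: Cons_nth_drop_Suc)
  finally show ?thesis by (simp add: nth_append)
qed

lemma bl_nth_box: "t < length Cs \<Longrightarrow> d < length (Cs ! t) \<Longrightarrow>
   bl n a Cs ! (length (bl n a (take t Cs)) + 1 + d) = Cs ! t ! d"
proof -
  assume t: "t < length Cs" and d: "d < length (Cs ! t)"
  have "bl n a Cs = bl n a (take t Cs) @ bl n (nx n t a) (drop t Cs)"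
    using t bl_take_drop by simp
  also have "\<dots> = bl n a (take t Cs) @ bl n (nx n t a) (Cs ! t # drop (Suc t) Cs)"
    using t by (simp add: Cons_nth_drop_Suc)
  finally show ?thesis using d by (simp add: nth_append)
qed

lemma length_bl_take_Suc: "t < length Cs \<Longrightarrow>
  length (bl n a (take (Suc t) Cs)) = length (bl n a (take t Cs)) + 1 + length (Cs ! t)"
  by (simp add: take_Suc_conv_app_nth bl_append)

lemma bl_nth_cases: "p < length (bl n a Cs) \<Longrightarrow> \<exists>t<length Cs.
   (p = length (bl n a (take t Cs)) \<and> bl n a Cs ! p = Ball (nx n t a)) \<or>
   (\<exists>d<length (Cs ! t). p = length (bl n a (take t Cs)) + 1 + d \<and> bl n a Cs ! p = Cs ! t ! d)"
proof (induction Cs arbitrary: a p)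
  case Nil then show ?case by simp
next
  case (Cons C Cs)
  show ?case
  proof (cases "p \<le> length C")
    case True
    show ?thesis
    proof (cases p)
      case 0 then show ?thesis by (intro exI[of _ 0]) simp
    next
      case (Suc q)
      then show ?thesis using True
        by (intro exI[of _ 0]) (auto simp: nth_append)
    qed
  next
    case False
    define q where "q = p - 1 - length C"
    have p: "p = Suc (length C + q)" using False q_def by simp
    have "q < length (bl n (nextl n a) Cs)" using Cons.prems p by simp
    from Cons.IH[OF this] obtain t where t: "t < length Cs" and
      h: "(q = length (bl n (nextl n a) (take t Cs)) \<and> bl n (nextl n a) Cs ! q = Ball (nx n t (nextl n a))) \<or>
   (\<exists>d<length (Cs ! t). q = length (bl n (nextl n a) (take t Cs)) + 1 + d \<and> bl n (nextl n a) Cs ! q = Cs ! t ! d)"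
      by blast
    have e: "bl n a (C # Cs) ! p = bl n (nextl n a) Cs ! q" using p by (simp add: nth_append)
    show ?thesis
      apply (intro exI[of _ "Suc t"])
      using t h e p by (auto simp: funpow_swap1)
  qed
qed

lemma bl_rotate:
  assumes "t \<le> length Cs" "length Cs = n" "1 \<le> a" "a \<le> n"
  shows "rotate (length (bl n a (take t Cs))) (bl n a Cs) = bl n (nx n t a) (drop t Cs @ take t Cs)"
proof -
  have "bl n a Cs = bl n a (take t Cs) @ bl n (nx n t a) (drop t Cs)"
    by (metis append_take_drop_id bl_append assms(1) length_take min_absorb2)
  then have "rotate (length (bl n a (take t Cs))) (bl n a Cs) = bl n (nx n t a) (drop t Cs) @ bl n a (take t Cs)"
    by (metis rotate_append)
  moreover have "nx n (length (drop t Cs)) (nx n t a) = a"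
    using assms nx_n[of a n] by (simp add: nx_comp)
  ultimately show ?thesis by (simp add: bl_append)
qed

lemma goodbl_rotate:
  assumes "t \<le> length Cs" "length Cs = n" "1 \<le> a" "a \<le> n" "goodbl n I a Cs"
  shows "goodbl n I (nx n t a) (drop t Cs @ take t Cs)"
proof -
  have "length (take t Cs) = t" using assms(1) by simp
  then have g: "goodbl n I a (take t Cs) \<and> goodbl n I (nx n t a) (drop t Cs)"
    using assms(5) goodbl_append[of n I a "take t Cs" "drop t Cs"] by simp
  moreover have "nx n (length (drop t Cs)) (nx n t a) = a"
    using assms nx_n[of a n] by (simp add: nx_comp)
  ultimately show ?thesis unfolding goodbl_append by simp
qed

lemma modh1: fixes r c L :: nat shows "r < L \<Longrightarrow> c < L \<Longrightarrow> ((r + c) mod L + L - r) mod L = c"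
proof (cases "r + c < L")
  case True
  assume "r < L" "c < L"
  then have "(r + c) mod L = r + c" using True by simp
  then have "(r + c) mod L + L - r = c + L" by simp
  then show ?thesis using \<open>c < L\<close> by simp
next
  case False
  assume a: "r < L" "c < L"
  have "(r + c) mod L = (r + c - L) mod L" using False by (simp add: le_mod_geq)
  also have "\<dots> = r + c - L" using a False by simp
  finally have "(r + c) mod L = r + c - L" .
  then have "(r + c) mod L + L - r = c" using False a by simp
  then show ?thesis using a by simp
qed

lemma mod2: fixes z L :: nat shows "z < 2 * L \<Longrightarrow> z mod L = (if z < L then z else z - L)"
proof (cases "z < L")
  case True then show ?thesis by simp
next
  case False
  assume z: "z < 2 * L"
  have "z mod L = (z - L) mod L" using False by (simp add: le_mod_geq)
  also have "\<dots> = z - L" using z False by simp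
  finally show ?thesis using False by simp
qed

lemma modh2: fixes r x y L :: nat shows "r < L \<Longrightarrow> x < y \<Longrightarrow> y \<le> L \<Longrightarrow> ((r + y) mod L + L - (r + x) mod L - 1) mod L = y - x - 1"
proof -
  assume a: "r < L" "x < y" "y \<le> L"
  have A: "(r + y) mod L = (if r + y < L then r + y else r + y - L)" using a by (intro mod2) simp
  have B: "(r + x) mod L = (if r + x < L then r + x else r + x - L)" using a by (intro mod2) simp
  define z where "z = (r + y) mod L + L - (r + x) mod L - 1"
  have z2: "z < 2 * L" using A B a unfolding z_def by (simp split: if_splits)
  have "z mod L = (if z < L then z else z - L)" using mod2[OF z2] .
  then show ?thesis using A B a unfolding z_def by (auto split: if_splits)
qed

lemma modh3: fixes r b L :: nat shows "r < L \<Longrightarrow> b < L \<Longrightarrow> (r + (b + L - r) mod L) mod L = b"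
proof -
  assume a: "r < L" "b < L"
  have A: "(b + L - r) mod L = (if b + L - r < L then b + L - r else b + L - r - L)" using a by (intro mod2) simp
  have B: "(r + (b + L - r) mod L) mod L = (if r + (b + L - r) mod L < L then r + (b + L - r) mod L else r + (b + L - r) mod L - L)"
    using a A by (intro mod2) (simp split: if_splits)
  show ?thesis using A B a by (auto split: if_splits)
qed

lemma Cset_eq: "Cset n w k = (\<lambda>d. (bpos w k + 1 + d) mod length w) ` {..< (bpos w (nextl n k) + length w - bpos w k - 1) mod length w}"
  by (auto simp: Cset_def Let_def)

lemma finite_Cset: "finite (Cset n w k)" by (simp add: Cset_eq)

lemma wt_zero: "count (wt n w) (Q m) = 0 \<longleftrightarrow> (\<forall>k\<in>{1..n}. \<forall>j\<in>Cset n w k. \<forall>i. w ! j = Box i \<longrightarrow> count (wbox n i k) (Q m) = 0)"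
  unfolding wt_def by (auto simp: count_sum finite_Cset split: letter.splits)

lemma length_bl_take_le: "length (bl n a (take t Cs)) \<le> length (bl n a Cs)"
proof (cases "t \<le> length Cs")
  case True then show ?thesis using bl_take_drop[OF True, of n a] by (metis le_add1 length_append)
next
  case False then show ?thesis by simp
qed

lemma core:
  assumes n1: "1 \<le> n" and lenCs: "length Cs = n"
    and wf: "\<forall>C\<in>set Cs. \<forall>x\<in>set C. \<exists>i. x = Box i \<and> 1 \<le> i \<and> i \<le> n"
    and r: "r < length w" and rot: "rotate r w = bl n 1 Cs"
  shows "w \<in> Omega (length w) n"
    and "\<And>k. 1 \<le> k \<Longrightarrow> k \<le> n \<Longrightarrow> Cset n w k = (\<lambda>d. (r + length (bl n 1 (take (k-1) Cs)) + 1 + d) mod length w) ` {..< length (Cs!(k-1))}"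
    and "\<And>k d. 1 \<le> k \<Longrightarrow> k \<le> n \<Longrightarrow> d < length (Cs!(k-1)) \<Longrightarrow> w ! ((r + length (bl n 1 (take (k-1) Cs)) + 1 + d) mod length w) = Cs!(k-1)!d"
proof -
  define L where "L = length w"
  have Lw: "length w = L" using L_def by simp
  define u where "u = bl n 1 Cs"
  define c where "c k = length (bl n 1 (take (k - 1) Cs))" for k
  have lenu: "length u = L" using rot unfolding u_def L_def by (metis length_rotate)
  have L0: "0 < L" using r unfolding L_def by linarith
  have rL: "r < L" using r L_def by simp
  have wu: "w ! ((r + p) mod L) = u ! p" if "p < L" for p
    using nth_rotate[of p w r] that rot unfolding u_def L_def by simp
  have wx: "w ! x = u ! ((x + L - r) mod L)" if "x < L" for x
    using wu[of "(x + L - r) mod L"] modh3[of r L x] that rL L0 by simp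
  have cstep: "c k + 1 + length (Cs!(k-1)) = (if k < n then c (k+1) else L)" if "1 \<le> k" "k \<le> n" for k
  proof -
    have "c k + 1 + length (Cs!(k-1)) = length (bl n 1 (take (Suc (k-1)) Cs))"
      using length_bl_take_Suc[of "k-1" Cs n 1] that lenCs unfolding c_def by simp
    then show ?thesis using that lenCs lenu unfolding c_def u_def by auto
  qed
  have cle: "c k + 1 + length (Cs!(k-1)) \<le> L" if "1 \<le> k" "k \<le> n" for k
  proof -
    have "c k + 1 + length (Cs!(k-1)) = length (bl n 1 (take (Suc (k-1)) Cs))"
      using length_bl_take_Suc[of "k-1" Cs n 1] that lenCs unfolding c_def by simp
    then show ?thesis using length_bl_take_le[of n 1 "Suc (k-1)" Cs] lenu unfolding u_def by simp
  qed
  have cL: "c k < L" if "1 \<le> k" "k \<le> n" for k using cle[OF that] by simp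
  have ub: "u ! c k = Ball k" if "1 \<le> k" "k \<le> n" for k
    using bl_nth_ball[of "k-1" Cs n 1] nx_small[of "k-1" n] that lenCs unfolding u_def c_def by simp
  have ubox: "u ! (c k + 1 + d) = Cs!(k-1)!d" if "1 \<le> k" "k \<le> n" "d < length (Cs!(k-1))" for k d
    using bl_nth_box[of "k-1" Cs d n 1] that lenCs unfolding u_def c_def by simp
  have ucases: "(\<exists>k\<in>{1..n}. p = c k \<and> u ! p = Ball k) \<or> (\<exists>i. u ! p = Box i \<and> 1 \<le> i \<and> i \<le> n)" if "p < L" for p
  proof -
    from bl_nth_cases[of p n 1 Cs] that lenu obtain t where t: "t < n" and
      h: "(p = length (bl n 1 (take t Cs)) \<and> u ! p = Ball (nx n t 1)) \<or> (\<exists>d<length (Cs ! t). p = length (bl n 1 (take t Cs)) + 1 + d \<and> u ! p = Cs ! t ! d)"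
      unfolding u_def using lenCs by auto
    show ?thesis
    proof (cases "p = length (bl n 1 (take t Cs)) \<and> u ! p = Ball (nx n t 1)")
      case True
      then show ?thesis using t nx_small[of t n] unfolding c_def by (intro disjI1 bexI[of _ "t+1"]) auto
    next
      case False
      then obtain d where d: "d < length (Cs!t)" "u ! p = Cs!t!d" using h by auto
      then have "Cs!t!d \<in> set (Cs!t)" "Cs!t \<in> set Cs" using t lenCs by auto
      then show ?thesis using wf d(2) by auto
    qed
  qed
  have uball: "p = c k" if "p < L" "u ! p = Ball k" for p k
    using ucases[OF that(1)] that(2) by auto
  have ballset: "{x. x < L \<and> w ! x = Ball k} = {(r + c k) mod L}" if "1 \<le> k" "k \<le> n" for k
  proof
    show "{(r + c k) mod L} \<subseteq> {x. x < L \<and> w ! x = Ball k}" using wu[of "c k"] cL[OF that] ub[OF that] L0 by auto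
    show "{x. x < L \<and> w ! x = Ball k} \<subseteq> {(r + c k) mod L}"
    proof
      fix x assume "x \<in> {x. x < L \<and> w ! x = Ball k}"
      then have x: "x < L" "w ! x = Ball k" by auto
      have "u ! ((x + L - r) mod L) = Ball k" using wx x by simp
      then have "(x + L - r) mod L = c k" using uball L0 by auto
      then show "x \<in> {(r + c k) mod L}" using modh3[of r L x] rL x by simp
    qed
  qed
  have bpos: "bpos w k = (r + c k) mod L" if "1 \<le> k" "k \<le> n" for k
  proof -
    have e: "\<And>x. (x < L \<and> w ! x = Ball k) = (x = (r + c k) mod L)" using ballset[OF that] by blast
    show ?thesis unfolding bpos_def Lw e by simp
  qed
  have c1: "c 1 = 0" unfolding c_def by simp
  have b1: "bpos w 1 = r" using bpos[of 1] n1 c1 rL by simp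
  have rho: "(bpos w k + L - bpos w 1) mod L = c k" if "1 \<le> k" "k \<le> n" for k
    using bpos[OF that] b1 modh1[of r L "c k"] rL cL[OF that] by simp
  show "w \<in> Omega (length w) n"
    unfolding Omega_def Lw
  proof (intro CollectI conjI allI impI ballI)
    show "length w = L" by (rule Lw)
  next
    fix i assume i: "i < L"
    show "(\<exists>k\<in>{1..n}. w ! i = Ball k) \<or> (\<exists>k\<in>{1..n}. w ! i = Box k)"
      using ucases[of "(i + L - r) mod L"] wx[OF i] L0 by auto
  next
    fix k assume "k \<in> {1..n}"
    then show "card {i. i < L \<and> w ! i = Ball k} = 1" using ballset by simp
  next
    fix k assume k: "1 \<le> k \<and> k < n"
    have "c k < c (k + 1)" using cstep[of k] k by simp
    then show "(bpos w k + L - bpos w 1) mod L < (bpos w (k + 1) + L - bpos w 1) mod L"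
      using rho[of k] rho[of "k+1"] k by simp
  qed
  show "Cset n w k = (\<lambda>d. (r + length (bl n 1 (take (k-1) Cs)) + 1 + d) mod length w) ` {..< length (Cs!(k-1))}"
    if k: "1 \<le> k" "k \<le> n" for k
  proof -
    have gap: "(bpos w (nextl n k) + L - bpos w k - 1) mod L = length (Cs!(k-1))"
    proof (cases "k < n")
      case True
      then have "bpos w (nextl n k) = (r + c (k+1)) mod L" using bpos[of "k+1"] k by (simp add: nextl_def)
      moreover have "c k < c (k+1)" "c (k+1) \<le> L" using cstep[OF k] cL[of "k+1"] True k by auto
      ultimately show ?thesis using modh2[of r L "c k" "c (k+1)"] bpos[OF k] rL cstep[OF k] True by simp
    next
      case False
      then have "k = n" using k by simp
      then have "bpos w (nextl n k) = (r + L) mod L" using b1 rL by (simp add: nextl_def)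
      moreover have "c k < L" using cL[OF k] by simp
      ultimately show ?thesis using modh2[of r L "c k" L] bpos[OF k] rL cstep[OF k] False by simp
    qed
    have f: "(bpos w k + 1 + d) mod L = (r + c k + 1 + d) mod L" for d
      unfolding bpos[OF k] by (metis add.assoc mod_add_left_eq)
    show ?thesis unfolding Cset_eq Lw gap f c_def by simp
  qed
  show "w ! ((r + length (bl n 1 (take (k-1) Cs)) + 1 + d) mod length w) = Cs!(k-1)!d"
    if k: "1 \<le> k" "k \<le> n" "d < length (Cs!(k-1))" for k d
  proof -
    have "c k + 1 + d < L" using cle[of k] k by simp
    then have "w ! ((r + (c k + 1 + d)) mod L) = u ! (c k + 1 + d)" using wu by blast
    then show ?thesis using ubox[OF k] unfolding Lw c_def by (simp add: add.assoc)
  qed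
qed

lemma take_drop_map_nth: "a \<le> b \<Longrightarrow> b \<le> length xs \<Longrightarrow> take (b - a) (drop a xs) = map (nth xs) [a..<b]"
  by (rule nth_equalityI) auto

lemma strict_mono_c:
  assumes "\<And>k. 1 \<le> k \<Longrightarrow> k < n \<Longrightarrow> (f::nat\<Rightarrow>nat) k < f (k+1)"
  shows "1 \<le> i \<Longrightarrow> i < j \<Longrightarrow> j \<le> n \<Longrightarrow> f i < f j"
proof (induction j)
  case 0 then show ?case by simp
next
  case (Suc j)
  show ?case
  proof (cases "i = j")
    case True then show ?thesis using assms[of j] Suc.prems by simp
  next
    case False
    then have "f i < f j" using Suc by simp
    also have "f j < f (Suc j)" using assms[of j] Suc.prems False by simp
    finally show ?thesis .
  qed
qed

lemma exists_bl:
  assumes n1: "1 \<le> n" and w: "w \<in> Omega L n"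
  shows "\<exists>r Cs. r < L \<and> length Cs = n \<and> (\<forall>C\<in>set Cs. \<forall>x\<in>set C. \<exists>i. x = Box i \<and> 1 \<le> i \<and> i \<le> n) \<and> rotate r w = bl n 1 Cs"
proof -
  have Lw: "length w = L" using w by (simp add: Omega_def)
  have lett: "\<forall>i<L. (\<exists>k\<in>{1..n}. w ! i = Ball k) \<or> (\<exists>k\<in>{1..n}. w ! i = Box k)" using w by (simp add: Omega_def)
  have cd: "\<And>k. k\<in>{1..n} \<Longrightarrow> card {i. i < L \<and> w ! i = Ball k} = 1" using w by (simp add: Omega_def)
  have ord: "\<And>k. 1 \<le> k \<Longrightarrow> k < n \<Longrightarrow> (bpos w k + L - bpos w 1) mod L < (bpos w (k+1) + L - bpos w 1) mod L"
    using w by (simp add: Omega_def)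
  define b where "b k = bpos w k" for k
  have bprop: "b k < L \<and> w ! b k = Ball k \<and> (\<forall>x. x < L \<and> w ! x = Ball k \<longrightarrow> x = b k)" if kk: "1 \<le> k" "k \<le> n" for k
  proof -
    have "card {i. i < L \<and> w ! i = Ball k} = 1" using cd[of k] kk by simp
    then obtain x where x: "{i. i < L \<and> w ! i = Ball k} = {x}" using card_1_singletonE by blast
    then have e: "\<And>i. (i < L \<and> w ! i = Ball k) = (i = x)" by blast
    have "b k = x" unfolding b_def bpos_def Lw e by simp
    then show ?thesis using e by auto
  qed
  have L0: "0 < L" using bprop[of 1] n1 by auto
  define r where "r = b 1"
  have rL: "r < L" using bprop[of 1] n1 r_def by auto
  define u where "u = rotate r w"
  have lenu: "length u = L" using Lw u_def by simp
  have uw: "u ! p = w ! ((r + p) mod L)" if "p < L" for p using nth_rotate[of p w r] that Lw u_def by simp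
  define c where "c k = (if k \<le> n then (b k + L - r) mod L else L)" for k
  have cmono1: "c k < c (k+1)" if "1 \<le> k" "k < n + 1" for k
  proof (cases "k < n")
    case True then show ?thesis using ord[of k] that unfolding c_def b_def r_def by simp
  next
    case False then show ?thesis using that L0 unfolding c_def by simp
  qed
  have cmono: "c i < c j" if "1 \<le> i" "i < j" "j \<le> n+1" for i j
    using strict_mono_c[of "n+1" c, OF cmono1] that by blast
  have c1: "c 1 = 0" using n1 rL unfolding c_def r_def by simp
  have cn1: "c (n+1) = L" unfolding c_def by simp
  have cleL: "c k \<le> L" if "1 \<le> k" "k \<le> n + 1" for k
    using cmono[of k "n+1"] cn1 that by (cases "k = n+1") auto
  have uc: "u ! c k = Ball k" if "1 \<le> k" "k \<le> n" for k
  proof -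
    have "c k < L" using cmono[of k "n+1"] that cn1 by simp
    then have "u ! c k = w ! ((r + c k) mod L)" by (rule uw)
    also have "(r + c k) mod L = b k" using modh3[of r L "b k"] rL bprop[OF that] that unfolding c_def by simp
    finally show ?thesis using bprop[OF that] by simp
  qed
  have uball: "\<exists>k\<in>{1..n}. p = c k" if "p < L" "u ! p = Ball j" for p j
  proof -
    have x: "(r + p) mod L < L" "w ! ((r + p) mod L) = Ball j" using uw that L0 by auto
    then have j: "j \<in> {1..n}" using lett by force
    then have "(r + p) mod L = b j" using bprop x by auto
    then have "c j = p" using modh1[of r L p] rL that j unfolding c_def by auto
    then show ?thesis using j by auto
  qed
  have ubox: "\<exists>i. u ! p = Box i \<and> 1 \<le> i \<and> i \<le> n" if "c k < p" "p < c (k+1)" "1 \<le> k" "k \<le> n" for p k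
  proof -
    have pL: "p < L" using that cleL[of "k+1"] by simp
    have nb: "\<not> (\<exists>j. u ! p = Ball j)"
    proof
      assume "\<exists>j. u ! p = Ball j"
      then obtain j where "u!p = Ball j" by auto
      then obtain k' where k': "k' \<in> {1..n}" "p = c k'" using uball pL by blast
      show False
      proof (cases "k' \<le> k")
        case True then have "c k' \<le> c k" using cmono[of k' k] k' that by (cases "k' = k") auto
        then show False using k' that by simp
      next
        case False then have "c (k+1) \<le> c k'" using cmono[of "k+1" k'] k' that by (cases "k' = k+1") auto
        then show False using k' that by simp
      qed
    qed
    have "(\<exists>j\<in>{1..n}. w ! ((r + p) mod L) = Ball j) \<or> (\<exists>j\<in>{1..n}. w ! ((r + p) mod L) = Box j)"
      using lett L0 by simp
    then show ?thesis using nb uw[OF pL] by auto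
  qed
  define Cs where "Cs = map (\<lambda>k. map (nth u) [Suc (c k)..<c (k+1)]) [1..<Suc n]"
  have lenCs: "length Cs = n" by (simp add: Cs_def)
  have Csk: "Cs ! t = map (nth u) [Suc (c (t+1))..<c (t+2)]" if "t < n" for t
    using that by (simp add: Cs_def del: upt_Suc)
  have wf: "\<forall>C\<in>set Cs. \<forall>x\<in>set C. \<exists>i. x = Box i \<and> 1 \<le> i \<and> i \<le> n"
  proof (intro ballI)
    fix C x assume C: "C \<in> set Cs" and x: "x \<in> set C"
    from C obtain k where k: "k \<in> set [1..<Suc n]" "C = map (nth u) [Suc (c k)..<c (k+1)]"
      unfolding Cs_def by auto
    from x k obtain p where p: "p \<in> set [Suc (c k)..<c (k+1)]" "x = u ! p" by auto
    show "\<exists>i. x = Box i \<and> 1 \<le> i \<and> i \<le> n" using ubox[of k p] p k by auto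
  qed
  have tk: "take (c (t+1)) u = bl n 1 (take t Cs)" if "t \<le> n" for t
    using that
  proof (induction t)
    case 0 then show ?case using c1 by simp
  next
    case (Suc t)
    have t: "t < n" using Suc.prems by simp
    have le: "c (t+1) < c (t+2)" "c (t+2) \<le> L" using cmono[of "t+1" "t+2"] cleL[of "t+2"] t by auto
    have "take (c (t+2)) u = take (c (t+1)) u @ take (c (t+2) - c (t+1)) (drop (c (t+1)) u)"
      using take_add[of "c (t+1)" "c (t+2) - c (t+1)" u] le by simp
    also have "take (c (t+2) - c (t+1)) (drop (c (t+1)) u) = map (nth u) [c (t+1)..<c (t+2)]"
      using take_drop_map_nth[of "c (t+1)" "c (t+2)" u] le lenu by simp
    also have "[c (t+1)..<c (t+2)] = c (t+1) # [Suc (c (t+1))..<c (t+2)]" using le upt_conv_Cons by simp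
    also have "map (nth u) (c (t+1) # [Suc (c (t+1))..<c (t+2)]) = Ball (t+1) # Cs ! t"
      using uc[of "t+1"] t Csk[OF t] by simp
    also have "take (c (t+1)) u = bl n 1 (take t Cs)" using Suc t by simp
    also have "bl n 1 (take t Cs) @ Ball (t+1) # Cs ! t = bl n 1 (take (Suc t) Cs)"
      using t lenCs nx_small[of t n] by (simp add: take_Suc_conv_app_nth bl_append)
    finally show ?case by simp
  qed
  have "u = bl n 1 Cs" using tk[of n] cn1 lenu lenCs by simp
  then show ?thesis using rL lenCs wf u_def by (intro exI[of _ r] exI[of _ Cs]) simp
qed

lemma goodbl_nth: "goodbl n I a Cs \<longleftrightarrow> (\<forall>t<length Cs. \<forall>x\<in>set (Cs!t). okbox n I (nx n t a) x)"
proof (induction Cs arbitrary: a)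
  case Nil then show ?case by simp
next
  case (Cons C Cs)
  show ?case by (simp add: Cons.IH All_less_Suc2 funpow_swap1)
qed

lemma QI_core:
  assumes n1: "1 \<le> n" and lenCs: "length Cs = n"
    and wf: "\<forall>C\<in>set Cs. \<forall>x\<in>set C. \<exists>i. x = Box i \<and> 1 \<le> i \<and> i \<le> n"
    and r: "r < length w" and rot: "rotate r w = bl n 1 Cs"
  shows "(\<forall>m\<in>I. count (wt n w) (Q m) = 0) \<longleftrightarrow> goodbl n I 1 Cs"
proof
  assume H: "\<forall>m\<in>I. count (wt n w) (Q m) = 0"
  show "goodbl n I 1 Cs" unfolding goodbl_nth
  proof (intro allI impI ballI)
    fix t x assume t: "t < length Cs" and x: "x \<in> set (Cs ! t)"
    obtain d where d: "d < length (Cs!t)" "x = Cs!t!d" using x by (auto simp: in_set_conv_nth)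
    obtain i where i: "x = Box i" "1 \<le> i" "i \<le> n" using wf t x by (meson nth_mem)
    define k where "k = t + 1"
    have k: "1 \<le> k" "k \<le> n" "t = k - 1" using t lenCs k_def by auto
    define j where "j = (r + length (bl n 1 (take (k-1) Cs)) + 1 + d) mod length w"
    have j: "j \<in> Cset n w k" using core(2)[OF n1 lenCs wf r rot k(1,2)] d k unfolding j_def by auto
    have wj: "w ! j = Box i" using core(3)[OF n1 lenCs wf r rot k(1,2)] d k i unfolding j_def by auto
    have "\<forall>m\<in>I. count (wbox n i k) (Q m) = 0" using H j wj k unfolding wt_zero by auto
    then show "okbox n I (nx n t 1) x" using nx_small[of t n] t lenCs i k_def by (auto simp: okbox_def)
  qed
next
  assume G: "goodbl n I 1 Cs"
  show "\<forall>m\<in>I. count (wt n w) (Q m) = 0" unfolding wt_zero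
  proof (intro ballI allI impI)
    fix m k j i assume m: "m \<in> I" and k: "k \<in> {1..n}" and j: "j \<in> Cset n w k" and wj: "w ! j = Box i"
    obtain d where d: "d < length (Cs!(k-1))" "j = (r + length (bl n 1 (take (k-1) Cs)) + 1 + d) mod length w"
      using core(2)[OF n1 lenCs wf r rot] k j by auto
    have "Cs!(k-1)!d = Box i" using core(3)[OF n1 lenCs wf r rot] d wj k by auto
    then have "Box i \<in> set (Cs!(k-1))" using d by (metis nth_mem)
    then have "okbox n I (nx n (k-1) 1) (Box i)" using G k lenCs unfolding goodbl_nth by auto
    then show "count (wbox n i k) (Q m) = 0" using nx_small[of "k-1" n] k m by (auto simp: okbox_def)
  qed
qed

definition BF :: "nat \<Rightarrow> nat set \<Rightarrow> letter list \<Rightarrow> bool" where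
  "BF n I v \<longleftrightarrow> (\<exists>r a Cs. 1 \<le> a \<and> a \<le> n \<and> length Cs = n \<and> goodbl n I a Cs \<and> rotate r v = bl n a Cs)"

lemma goodbl_wf: "goodbl n I a Cs \<Longrightarrow> \<forall>C\<in>set Cs. \<forall>x\<in>set C. \<exists>i. x = Box i \<and> 1 \<le> i \<and> i \<le> n"
  unfolding goodbl_nth okbox_def by (metis in_set_conv_nth)

lemma OmegaI_iff:
  assumes n1: "1 \<le> n"
  shows "w \<in> OmegaI L n I \<longleftrightarrow> length w = L \<and> BF n I w"
proof
  assume w: "w \<in> OmegaI L n I"
  then have wO: "w \<in> Omega L n" and H: "\<forall>m\<in>I. count (wt n w) (Q m) = 0" by (auto simp: OmegaI_def)
  have Lw: "length w = L" using wO by (simp add: Omega_def)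
  obtain r Cs where r: "r < L" "length Cs = n" "\<forall>C\<in>set Cs. \<forall>x\<in>set C. \<exists>i. x = Box i \<and> 1 \<le> i \<and> i \<le> n"
    "rotate r w = bl n 1 Cs" using exists_bl[OF n1 wO] by blast
  have "goodbl n I 1 Cs" using QI_core[OF n1 r(2) r(3) _ r(4)] r(1) Lw H by simp
  then show "length w = L \<and> BF n I w" unfolding BF_def using Lw r n1 by blast
next
  assume "length w = L \<and> BF n I w"
  then obtain r a Cs where Lw: "length w = L" and a: "1 \<le> a" "a \<le> n" and lenCs: "length Cs = n"
    and g: "goodbl n I a Cs" and rot: "rotate r w = bl n a Cs" unfolding BF_def by blast
  define t where "t = n + 1 - a"
  have t: "t \<le> length Cs" using lenCs a t_def by simp
  have nt: "nx n t a = 1" using nx_eq[OF a, of t] a unfolding t_def by simp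
  define q where "q = length (bl n a (take t Cs))"
  define Cs' where "Cs' = drop t Cs @ take t Cs"
  have rot2: "rotate q (bl n a Cs) = bl n 1 Cs'" using bl_rotate[OF t lenCs a] nt unfolding q_def Cs'_def by simp
  have g2: "goodbl n I 1 Cs'" using goodbl_rotate[OF t lenCs a g] nt unfolding Cs'_def by simp
  have lenCs': "length Cs' = n" using lenCs t unfolding Cs'_def by simp
  have "Cs \<noteq> []" using lenCs n1 by auto
  then have "length (bl n a Cs) > 0" by (cases Cs) auto
  then have L0: "0 < length w" using rot by (metis length_rotate)
  define r' where "r' = (q + r) mod length w"
  have r': "r' < length w" using L0 r'_def by simp
  have rot3: "rotate r' w = bl n 1 Cs'"
    using rot2 rot unfolding r'_def by (metis rotate_conv_mod rotate_rotate)
  have wf: "\<forall>C\<in>set Cs'. \<forall>x\<in>set C. \<exists>i. x = Box i \<and> 1 \<le> i \<and> i \<le> n" using goodbl_wf[OF g2] .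
  have "w \<in> Omega (length w) n" using core(1)[OF n1 lenCs' wf r' rot3] .
  moreover have "\<forall>m\<in>I. count (wt n w) (Q m) = 0" using QI_core[OF n1 lenCs' wf r' rot3] g2 by simp
  ultimately show "w \<in> OmegaI L n I" using Lw by (simp add: OmegaI_def)
qed

lemma rot_back: "rotate (r + (length v - 1) * s) (rotate s v) = rotate r v"
proof (cases "v = []")
  case True then show ?thesis by simp
next
  case False
  then have "(length v - 1) * s + s = length v * s" by (cases "length v") auto
  then have "rotate (r + (length v - 1) * s) (rotate s v) = rotate (r + length v * s) v"
    by (simp add: rotate_rotate add.assoc)
  also have "\<dots> = rotate r v" by (metis mod_mult_self2 rotate_conv_mod)
  finally show ?thesis .
qed

lemma BF_rot: "BF n I v \<Longrightarrow> BF n I (rotate s v)"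
  unfolding BF_def by (metis rot_back)

lemma BF_start:
  assumes bf: "BF n I v" and v0: "v ! 0 = Ball k" and vne: "v \<noteq> []"
  shows "\<exists>Cs. length Cs = n \<and> goodbl n I k Cs \<and> v = bl n k Cs \<and> 1 \<le> k \<and> k \<le> n"
proof -
  obtain r a Cs where a: "1 \<le> a" "a \<le> n" and lenCs: "length Cs = n"
    and g: "goodbl n I a Cs" and rot: "rotate r v = bl n a Cs" using bf unfolding BF_def by blast
  define L where "L = length v"
  have L0: "0 < L" using vne L_def by simp
  define X where "X = bl n a Cs"
  have lenX: "length X = L" using rot L_def X_def by (metis length_rotate)
  define q where "q = (L - r mod L) mod L"
  have vq: "v = rotate q X"
  proof -
    have "rotate q X = rotate (q + r) v" using rot X_def by (metis rotate_rotate)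
    also have "\<dots> = rotate ((q + r) mod L) v" using L_def rotate_conv_mod by metis
    also have "(q + r) mod L = 0"
    proof -
      have "(q + r) mod L = ((L - r mod L) + r mod L) mod L" unfolding q_def by (simp add: mod_simps)
      also have "\<dots> = 0" using L0 by simp
      finally show ?thesis .
    qed
    finally show ?thesis by simp
  qed
  have qL: "q < L" using L0 q_def by simp
  have "v ! 0 = X ! q" using vq nth_rotate[of 0 X q] lenX L0 qL by simp
  then have Xq: "X ! q = Ball k" using v0 by simp
  from bl_nth_cases[of q n a Cs] qL lenX X_def obtain t where t: "t < length Cs" and
    h: "(q = length (bl n a (take t Cs)) \<and> X ! q = Ball (nx n t a)) \<or>
        (\<exists>d<length (Cs ! t). q = length (bl n a (take t Cs)) + 1 + d \<and> X ! q = Cs ! t ! d)" by auto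
  have wf: "\<forall>C\<in>set Cs. \<forall>x\<in>set C. \<exists>i. x = Box i \<and> 1 \<le> i \<and> i \<le> n" using goodbl_wf[OF g] .
  have notbox: "\<not> (\<exists>d<length (Cs ! t). X ! q = Cs ! t ! d)"
  proof
    assume "\<exists>d<length (Cs ! t). X ! q = Cs ! t ! d"
    then obtain d where "d < length (Cs!t)" "X ! q = Cs!t!d" by blast
    then have "Ball k \<in> set (Cs!t)" using Xq by (metis nth_mem)
    then show False using wf t by (meson nth_mem letter.distinct(1))
  qed
  then have hq: "q = length (bl n a (take t Cs))" and kk: "nx n t a = k" using h Xq by auto
  have "v = bl n k (drop t Cs @ take t Cs)" using vq bl_rotate[of t Cs n a] t lenCs a hq kk X_def by simp
  moreover have "goodbl n I k (drop t Cs @ take t Cs)" using goodbl_rotate[of t Cs n a] t lenCs a g kk by simp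
  moreover have "1 \<le> k \<and> k \<le> n" using nx_range[OF a, of t] kk by simp
  ultimately show ?thesis using lenCs by (intro exI[of _ "drop t Cs @ take t Cs"]) simp
qed

lemma seg_rot: "is_seg w s xs \<Longrightarrow> rotate s w = xs @ drop (length xs) (rotate s w)"
proof -
  assume a: "is_seg w s xs"
  have "take (length xs) (rotate s w) = xs"
  proof (rule nth_equalityI)
    show "length (take (length xs) (rotate s w)) = length xs" using a by (simp add: is_seg_def)
    fix j assume "j < length (take (length xs) (rotate s w))"
    then have j: "j < length xs" "j < length w" by auto
    then show "take (length xs) (rotate s w) ! j = xs ! j" using a nth_rotate[of j w s] by (simp add: is_seg_def)
  qed
  then show ?thesis by (metis append_take_drop_id)
qed

lemma length_replace_seg: "length (replace_seg w s ys) = length w"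
  by (simp add: replace_seg_def)

lemma repl_rot: "s < length w \<Longrightarrow> length ys \<le> length w \<Longrightarrow>
  rotate s (replace_seg w s ys) = ys @ drop (length ys) (rotate s w)"
proof -
  assume s: "s < length w" and ys: "length ys \<le> length w"
  show ?thesis
  proof (rule nth_equalityI)
    show "length (rotate s (replace_seg w s ys)) = length (ys @ drop (length ys) (rotate s w))"
      using ys by (simp add: length_replace_seg)
    fix j assume "j < length (rotate s (replace_seg w s ys))"
    then have j: "j < length w" by (simp add: length_replace_seg)
    have L0: "0 < length w" using s by linarith
    have e: "((s + j) mod length w + length w - s) mod length w = j" using modh1[OF s j] .
    have "rotate s (replace_seg w s ys) ! j = replace_seg w s ys ! ((s + j) mod length w)"
      using nth_rotate[of j "replace_seg w s ys" s] j by (simp add: length_replace_seg)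
    also have "\<dots> = (if j < length ys then ys ! j else w ! ((s + j) mod length w))"
      unfolding replace_seg_def using L0 e by (simp add: Let_def)
    also have "\<dots> = (ys @ drop (length ys) (rotate s w)) ! j"
      using j ys nth_rotate[of j w s] by (simp add: nth_append)
    finally show "rotate s (replace_seg w s ys) ! j = (ys @ drop (length ys) (rotate s w)) ! j" .
  qed
qed

lemma boxes_prefix: "\<forall>x\<in>set C. is_box x \<Longrightarrow> \<forall>x\<in>set D. is_box x \<Longrightarrow> C @ Ball a # X = D @ Ball b # Y \<Longrightarrow> C = D \<and> a = b \<and> X = Y"
proof (induction C arbitrary: D)
  case Nil then show ?case by (cases D) (auto simp: is_box_def)
next
  case (Cons c C) then show ?case by (cases D) (auto simp: is_box_def)
qed

lemma bl_hd: "Cs \<noteq> [] \<Longrightarrow> \<exists>Z. bl n a Cs = Ball a # Z"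
  by (cases Cs) auto

lemma nx_next: "nx n u (nextl n k) = nx n (Suc u) k"
  by (metis comp_apply funpow_Suc_right)

lemma step_T1:
  assumes n1: "1 \<le> n" and k: "1 \<le> k" "k \<le> n" and ik: "i \<noteq> k" and I: "I \<subseteq> {1..n}"
    and bf: "BF n I (Ball k # Box i # rest)"
  shows "BF n I (Box i # Ball k # rest)"
proof -
  obtain Cs where lenCs: "length Cs = n" and g: "goodbl n I k Cs" and v: "Ball k # Box i # rest = bl n k Cs"
    using BF_start[OF bf] by auto
  obtain C0 Cs1 where Cs: "Cs = C0 # Cs1" using lenCs n1 by (cases Cs) auto
  have e1: "Box i # rest = C0 @ bl n (nextl n k) Cs1" using v Cs by simp
  obtain C0' where C0: "C0 = Box i # C0'" and rest: "rest = C0' @ bl n (nextl n k) Cs1"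
  proof (cases C0)
    case Nil
    then have "bl n (nextl n k) Cs1 = Box i # rest" using e1 by simp
    then show ?thesis by (cases Cs1) auto
  next
    case (Cons y C0')
    then show ?thesis using e1 that by auto
  qed
  have ok: "okbox n I k (Box i)" using g Cs C0 by simp
  then have i: "1 \<le> i" "i \<le> n" and ci: "\<forall>m\<in>I. count (wbox n i k) (Q m) = 0" by (auto simp: okbox_def)
  have n2: "2 \<le> n" using i k ik by auto
  then have "Cs1 \<noteq> []" using lenCs Cs by auto
  then obtain Cm Cl where Cs1: "Cs1 = Cm @ [Cl]" by (metis rev_exhaust)
  have lenCm: "length Cm = n - 2" using lenCs Cs Cs1 by simp
  have sC: "Suc (length Cm) = n - 1" using lenCm n2 by simp
  have lab: "nx n (length Cm) (nextl n k) = prevl n k"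
  proof -
    have "nx n (length Cm) (nextl n k) = nx n (n - 1) k" using nx_next[where n=n and u="length Cm" and k=k] unfolding sC .
    then show ?thesis using nx_prev[OF k] by simp
  qed
  have g1: "(\<forall>x\<in>set C0'. okbox n I k x) \<and> goodbl n I (nextl n k) Cm \<and> (\<forall>x\<in>set Cl. okbox n I (prevl n k) x)"
    using g Cs C0 Cs1 lab by (simp add: goodbl_append)
  have okp: "okbox n I (prevl n k) (Box i)"
    using i ci cyc_T1[OF _ _ k i ik] I by (auto simp: okbox_def)
  define Cs' where "Cs' = C0' # Cm @ [Cl @ [Box i]]"
  have "rotate 1 (Box i # Ball k # rest) = bl n k Cs'"
    using rest Cs1 lab unfolding Cs'_def by (simp add: bl_append)
  moreover have "goodbl n I k Cs'" using g1 okp lab unfolding Cs'_def by (simp add: goodbl_append)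
  moreover have "length Cs' = n" using lenCm n2 unfolding Cs'_def by simp
  ultimately show ?thesis unfolding BF_def using k by blast
qed

lemma step_T2:
  assumes n1: "1 \<le> n" and k: "1 \<le> k" "k \<le> n" and Cb: "\<forall>x\<in>set C. is_box x" and I: "I \<subseteq> {1..n}"
    and bf: "BF n I (Ball (prevl n k) # C @ Ball k # Box k # rest)"
  shows "BF n I (Ball (prevl n k) # Box (prevl n k) # C @ Ball k # rest)"
proof -
  let ?p = "prevl n k"
  have p: "1 \<le> ?p" "?p \<le> n" using prev_range[OF k] by auto
  obtain Cs where lenCs: "length Cs = n" and g: "goodbl n I ?p Cs" and v: "Ball ?p # C @ Ball k # Box k # rest = bl n ?p Cs"
    using BF_start[OF bf] by auto
  obtain C0 Cs1 where Cs: "Cs = C0 # Cs1" using lenCs n1 by (cases Cs) auto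
  have np: "nextl n ?p = k" using next_prev[OF k] .
  have e1: "C @ Ball k # Box k # rest = C0 @ bl n k Cs1" using v Cs np by simp
  have okC0: "\<forall>x\<in>set C0. okbox n I ?p x" using g Cs by simp
  have C0b: "\<forall>x\<in>set C0. is_box x" using okC0 by (auto simp: okbox_def is_box_def)
  have "Cs1 \<noteq> []"
  proof
    assume "Cs1 = []"
    then have "Ball k \<in> set C0" using e1 by (metis append.right_neutral bl.simps(1) in_set_conv_decomp)
    then show False using C0b by (auto simp: is_box_def)
  qed
  then obtain C1 Cs2 where Cs1: "Cs1 = C1 # Cs2" by (cases Cs1) auto
  have e2: "C @ Ball k # (Box k # rest) = C0 @ Ball k # (C1 @ bl n (nextl n k) Cs2)" using e1 Cs1 by simp
  have CC: "C = C0" and e3: "Box k # rest = C1 @ bl n (nextl n k) Cs2" using boxes_prefix[OF Cb C0b e2] by auto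
  obtain C1' where C1: "C1 = Box k # C1'" and rest: "rest = C1' @ bl n (nextl n k) Cs2"
  proof (cases C1)
    case Nil
    then have "bl n (nextl n k) Cs2 = Box k # rest" using e3 by simp
    then show ?thesis by (cases Cs2) auto
  next
    case (Cons y C1')
    then show ?thesis using e3 that by auto
  qed
  have okp: "okbox n I ?p (Box ?p)" using p cyc_T2 I by (auto simp: okbox_def)
  define Cs' where "Cs' = (Box ?p # C0) # C1' # Cs2"
  have "rotate 0 (Ball ?p # Box ?p # C @ Ball k # rest) = bl n ?p Cs'" using CC rest np unfolding Cs'_def by simp
  moreover have "goodbl n I ?p Cs'" using g okp np Cs Cs1 C1 unfolding Cs'_def by simp
  moreover have "length Cs' = n" using lenCs Cs Cs1 unfolding Cs'_def by simp
  ultimately show ?thesis unfolding BF_def using p by blast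
qed

lemma step_T3:
  assumes n1: "1 \<le> n" and k: "1 \<le> k" "k \<le> n" and kI: "k \<notin> I" and ik: "i \<noteq> k" and I: "I \<subseteq> {1..n}"
    and bf: "BF n I (Box i # Ball k # rest)"
  shows "BF n I (Ball k # Box i # rest)"
proof -
  have bf1: "BF n I (Ball k # rest @ [Box i])" using BF_rot[OF bf, of 1] by simp
  obtain Cs where lenCs: "length Cs = n" and g: "goodbl n I k Cs" and v: "Ball k # rest @ [Box i] = bl n k Cs"
    using BF_start[OF bf1] by auto
  have "Cs \<noteq> []" using lenCs n1 by auto
  then obtain Cm Cl where Cs: "Cs = Cm @ [Cl]" by (metis rev_exhaust)
  have lenCm: "length Cm = n - 1" using lenCs Cs by simp
  have lab: "nx n (length Cm) k = prevl n k" using nx_prev[OF k] lenCm by simp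
  have e1: "(Ball k # rest) @ [Box i] = bl n k Cm @ Ball (prevl n k) # Cl" using v Cs lab by (simp add: bl_append)
  obtain Cl' where Cl: "Cl = Cl' @ [Box i]"
  proof (cases Cl rule: rev_cases)
    case Nil
    then have "(Ball k # rest) @ [Box i] = bl n k Cm @ [Ball (prevl n k)]" using e1 by simp
    then show ?thesis by (simp only: append1_eq_conv) simp
  next
    case (snoc Cl' y)
    then have "(Ball k # rest) @ [Box i] = (bl n k Cm @ Ball (prevl n k) # Cl') @ [y]" using e1 by simp
    then have "y = Box i" by (simp only: append1_eq_conv)
    then show ?thesis using snoc that by simp
  qed
  have e2: "Ball k # rest = bl n k Cm @ Ball (prevl n k) # Cl'"
  proof -
    have "(Ball k # rest) @ [Box i] = (bl n k Cm @ Ball (prevl n k) # Cl') @ [Box i]" using e1 Cl by simp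
    then show ?thesis by (simp only: append1_eq_conv)
  qed
  have gg: "goodbl n I k Cm" "\<forall>x\<in>set Cl. okbox n I (prevl n k) x" using g Cs lab by (auto simp: goodbl_append)
  have ok: "okbox n I (prevl n k) (Box i)" using gg Cl by simp
  then have i: "1 \<le> i" "i \<le> n" and ci: "\<forall>m\<in>I. count (wbox n i (prevl n k)) (Q m) = 0" by (auto simp: okbox_def)
  have n2: "2 \<le> n" using i k ik by auto
  then have "Cm \<noteq> []" using lenCm by auto
  then obtain C0 Cm' where Cm: "Cm = C0 # Cm'" by (cases Cm) auto
  have sC: "Suc (length Cm') = length Cm" using Cm by simp
  have lab2: "nx n (length Cm') (nextl n k) = prevl n k"
  proof -
    have "nx n (length Cm') (nextl n k) = nx n (length Cm) k" using nx_next[where n=n and u="length Cm'" and k=k] unfolding sC .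
    then show ?thesis using lab by simp
  qed
  have rest: "rest = C0 @ bl n (nextl n k) Cm' @ Ball (prevl n k) # Cl'" using e2 Cm by simp
  have "count (wbox n i k) (Q m) = 0" if m: "m \<in> I" for m
  proof -
    have "1 \<le> m" "m \<le> n" "m \<noteq> k" using m I kI by auto
    then show ?thesis using cyc_T3[OF _ _ k i ik] ci m by blast
  qed
  then have okk: "okbox n I k (Box i)" using i by (auto simp: okbox_def)
  define Cs' where "Cs' = (Box i # C0) # Cm' @ [Cl']"
  have "rotate 0 (Ball k # Box i # rest) = bl n k Cs'" using rest lab2 unfolding Cs'_def by (simp add: bl_append)
  moreover have "goodbl n I k Cs'" using gg okk Cm Cl lab2 unfolding Cs'_def by (simp add: goodbl_append)
  moreover have "length Cs' = n" using lenCm Cm unfolding Cs'_def by simp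
  ultimately show ?thesis unfolding BF_def using k by blast
qed

lemma step_T4:
  assumes n1: "1 \<le> n" and k: "1 \<le> k" "k \<le> n" and kI: "k \<notin> I" and Cb: "\<forall>x\<in>set C. is_box x" and I: "I \<subseteq> {1..n}"
    and bf: "BF n I (Box k # Ball k # C @ Ball (nextl n k) # rest)"
  shows "BF n I (Ball k # C @ Box (nextl n k) # Ball (nextl n k) # rest)"
proof -
  let ?q = "nextl n k"
  have q: "1 \<le> ?q" "?q \<le> n" using next_range[OF k] by auto
  have bf1: "BF n I (Ball k # C @ Ball ?q # rest @ [Box k])" using BF_rot[OF bf, of 1] by simp
  obtain Cs where lenCs: "length Cs = n" and g: "goodbl n I k Cs" and v: "Ball k # C @ Ball ?q # rest @ [Box k] = bl n k Cs"
    using BF_start[OF bf1] by auto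
  obtain C0 Cs1 where Cs: "Cs = C0 # Cs1" using lenCs n1 by (cases Cs) auto
  have e1: "C @ Ball ?q # rest @ [Box k] = C0 @ bl n ?q Cs1" using v Cs by simp
  have okC0: "\<forall>x\<in>set C0. okbox n I k x" using g Cs by simp
  have C0b: "\<forall>x\<in>set C0. is_box x" using okC0 by (auto simp: okbox_def is_box_def)
  have "Cs1 \<noteq> []"
  proof
    assume "Cs1 = []"
    then have "Ball ?q \<in> set C0" using e1 by (metis append.right_neutral bl.simps(1) in_set_conv_decomp)
    then show False using C0b by (auto simp: is_box_def)
  qed
  then obtain Cm Cl where Cs1: "Cs1 = Cm @ [Cl]" by (metis rev_exhaust)
  have n2: "2 \<le> n" using lenCs Cs Cs1 by simp
  have lenCm: "length Cm = n - 2" using lenCs Cs Cs1 by simp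
  have sC: "Suc (length Cm) = n - 1" using lenCm n2 by simp
  have lab: "nx n (length Cm) ?q = prevl n k"
  proof -
    have "nx n (length Cm) (nextl n k) = nx n (n - 1) k" using nx_next[where n=n and u="length Cm" and k=k] unfolding sC .
    then show ?thesis using nx_prev[OF k] by simp
  qed
  have e2: "(C @ Ball ?q # rest) @ [Box k] = C0 @ bl n ?q Cm @ Ball (prevl n k) # Cl"
    using e1 Cs1 lab by (simp add: bl_append)
  obtain Cl' where Cl: "Cl = Cl' @ [Box k]"
  proof (cases Cl rule: rev_cases)
    case Nil
    then have "(C @ Ball ?q # rest) @ [Box k] = (C0 @ bl n ?q Cm) @ [Ball (prevl n k)]" using e2 by simp
    then show ?thesis by (simp only: append1_eq_conv) simp
  next
    case (snoc Cl' y)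
    then have "(C @ Ball ?q # rest) @ [Box k] = (C0 @ bl n ?q Cm @ Ball (prevl n k) # Cl') @ [y]" using e2 by simp
    then have "y = Box k" by (simp only: append1_eq_conv)
    then show ?thesis using snoc that by simp
  qed
  have e3: "C @ Ball ?q # rest = C0 @ bl n ?q Cm @ Ball (prevl n k) # Cl'"
  proof -
    have "(C @ Ball ?q # rest) @ [Box k] = (C0 @ bl n ?q Cm @ Ball (prevl n k) # Cl') @ [Box k]" using e2 Cl by simp
    then show ?thesis by (simp only: append1_eq_conv)
  qed
  have blz: "bl n ?q (Cm @ [Cl']) = bl n ?q Cm @ Ball (prevl n k) # Cl'" using lab by (simp add: bl_append)
  obtain Z where Z: "bl n ?q (Cm @ [Cl']) = Ball ?q # Z" using bl_hd[of "Cm @ [Cl']" n ?q] by auto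
  have e4: "C @ Ball ?q # rest = C0 @ Ball ?q # Z" using e3 blz Z by simp
  have CC: "C = C0" and rest: "rest = Z" using boxes_prefix[OF Cb C0b e4] by auto
  have gg: "goodbl n I ?q Cm" "\<forall>x\<in>set Cl. okbox n I (prevl n k) x" using g Cs Cs1 lab by (auto simp: goodbl_append)
  have "okbox n I (prevl n k) (Box k)" using gg Cl by simp
  then have ck: "\<forall>m\<in>I. count (wbox n k (prevl n k)) (Q m) = 0" by (auto simp: okbox_def)
  have Iempty: "I = {}"
  proof (rule ccontr)
    assume "I \<noteq> {}"
    then obtain m where m: "m \<in> I" by auto
    then have "m \<noteq> k" "1 \<le> m" "m \<le> n" using kI I by auto
    then show False using cyc_T4[OF n2 k] ck m by blast
  qed
  define Cs' where "Cs' = (C0 @ [Box ?q]) # Cm @ [Cl']"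
  have "rotate 0 (Ball k # C @ Box ?q # Ball ?q # rest) = bl n k Cs'"
    using CC rest Z unfolding Cs'_def by simp
  moreover have "goodbl n I k Cs'" using okC0 gg Cl lab q Iempty unfolding Cs'_def by (simp add: goodbl_append okbox_def)
  moreover have "length Cs' = n" using lenCm n2 unfolding Cs'_def by simp
  ultimately show ?thesis unfolding BF_def using k by blast
qed

lemma frame:
  assumes n1: "1 \<le> n" and w: "w \<in> OmegaI L n I" and seg: "is_seg w s xs" and len: "length ys = length xs"
    and w': "w' = replace_seg w s ys" and step: "\<And>rest. BF n I (xs @ rest) \<Longrightarrow> BF n I (ys @ rest)"
  shows "w' \<in> OmegaI L n I"
proof -
  have Lw: "length w = L" and bf: "BF n I w" using OmegaI_iff[OF n1] w by auto
  have s: "s < length w" "length xs \<le> length w" using seg by (auto simp: is_seg_def)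
  define rest where "rest = drop (length xs) (rotate s w)"
  have e: "rotate s w = xs @ rest" using seg_rot[OF seg] unfolding rest_def .
  have "BF n I (rotate s w)" using BF_rot[OF bf] .
  then have "BF n I (xs @ rest)" unfolding e .
  then have "BF n I (ys @ rest)" by (rule step)
  moreover have "rotate s w' = ys @ rest" using repl_rot[of s w ys] s len w' unfolding rest_def by simp
  ultimately have "BF n I (rotate s w')" by simp
  then have "BF n I (rotate (0 + (length w' - 1) * s) (rotate s w'))" by (rule BF_rot)
  then have "BF n I w'" unfolding rot_back by simp
  moreover have "length w' = L" using w' Lw by (simp add: length_replace_seg)
  ultimately show ?thesis using OmegaI_iff[OF n1] by auto
qed

theorem lemma5p4:
  fixes n L :: nat and I :: "nat set" and w w' :: "letter list"
  assumes "1 \<le> n" and "n \<le> L" and "I \<subseteq> {1..n}"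
    and "w \<in> OmegaI L n I"
    and "(\<exists>k. T1 n k w w' \<or> T2 n k w w') \<or> (\<exists>k. k \<notin> I \<and> (T3 n k w w' \<or> T4 n k w w'))"
  shows "w' \<in> OmegaI L n I"
proof -
  note n1 = assms(1) and I = assms(3) and w = assms(4)
  from assms(5) show ?thesis
  proof (elim disjE exE conjE)
    fix k assume "T1 n k w w'"
    then obtain s i where k: "1 \<le> k" "k \<le> n" and ik: "i \<noteq> k" and seg: "is_seg w s [Ball k, Box i]"
      and w': "w' = replace_seg w s [Box i, Ball k]" unfolding T1_def by auto
    show ?thesis using frame[OF n1 w seg _ w'] step_T1[OF n1 k ik I] by simp
  next
    fix k assume "T2 n k w w'"
    then obtain s C where k: "1 \<le> k" "k \<le> n" and Cb: "\<forall>x\<in>set C. is_box x"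
      and seg: "is_seg w s ([Ball (prevl n k)] @ C @ [Ball k, Box k])"
      and w': "w' = replace_seg w s ([Ball (prevl n k), Box (prevl n k)] @ C @ [Ball k])" unfolding T2_def by auto
    show ?thesis using frame[OF n1 w seg _ w'] step_T2[OF n1 k Cb I] by simp
  next
    fix k assume kI: "k \<notin> I" and "T3 n k w w'"
    then obtain s i where k: "1 \<le> k" "k \<le> n" and ik: "i \<noteq> k" and seg: "is_seg w s [Box i, Ball k]"
      and w': "w' = replace_seg w s [Ball k, Box i]" unfolding T3_def by auto
    show ?thesis using frame[OF n1 w seg _ w'] step_T3[OF n1 k kI ik I] by simp
  next
    fix k assume kI: "k \<notin> I" and "T4 n k w w'"
    then obtain s C where k: "1 \<le> k" "k \<le> n" and Cb: "\<forall>x\<in>set C. is_box x"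
      and seg: "is_seg w s ([Box k, Ball k] @ C @ [Ball (nextl n k)])"
      and w': "w' = replace_seg w s ([Ball k] @ C @ [Box (nextl n k), Ball (nextl n k)])" unfolding T4_def by auto
    show ?thesis using frame[OF n1 w seg _ w'] step_T4[OF n1 k kI Cb I] by simp
  qed
qed

end
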